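(* For every integer $s$, $$\sum_{k=1}^\infty\frac{L_{2k+s}}{4^k(2k-1)(2k)(2k+1)}=-L_s\ln 2+\frac5{16}L_{s+1}\ln 5+\frac{\sqrt5}{8}(15F_{s-1}-F_s)\ln\alpha-\frac{L_s}{2},$$ $$\sum_{k=1}^\infty\frac{F_{2k+s}}{4^k(2k-1)(2k)(2k+1)}=-F_s\ln 2+\frac5{16}F_{s+1}\ln 5+\frac{1}{8\sqrt5}(15L_{s-1}-L_s)\ln\alpha-\frac{F_s}{2}.$$
   Context: $F_n$ and $L_n$ are the Fibonacci and Lucas numbers for $n\in\mathbb Z$: $F_n=(\alpha^n-\beta^n)/(\alpha-\beta)$, $L_n=\alpha^n+\beta^n$, where $\alpha=(1+\sqrt5)/2$, $\beta=(1-\sqrt5)/2$. *)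

theory Defs
  imports Complex_Main
begin

definition phi_alpha :: real where "phi_alpha = (1 + sqrt 5) / 2"
definition phi_beta :: real where "phi_beta = (1 - sqrt 5) / 2"

definition fibZ :: "int \<Rightarrow> real" where
  "fibZ n = (phi_alpha powi n - phi_beta powi n) / (phi_alpha - phi_beta)"
definition lucZ :: "int \<Rightarrow> real" where
  "lucZ n = phi_alpha powi n + phi_beta powi n"

end

theory Submission
  imports Defs "HOL-Analysis.Analysis"
begin

lemma P1:
  fixes x :: real assumes "\<bar>x\<bar> < 1"
  shows "(\<lambda>k. x ^ (2*k+1) / real (2*k+1)) sums artanh x"
proof -
  have A: "(\<lambda>n. - ((-x)^n) / of_nat n) sums ln (1 + x)" using ln_series'[OF assms] .
  have B: "(\<lambda>n. - ((-(-x))^n) / of_nat n) sums ln (1 + -x)" using ln_series'[of "-x"] assms by simp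
  have C: "(\<lambda>n. (- ((-x)^n) / of_nat n - - ((-(-x))^n) / of_nat n) / 2) sums ((ln (1 + x) - ln (1 + -x))/2)"
    by (intro sums_divide sums_diff A B)
  have e: "artanh x = (ln (1 + x) - ln (1 + -x))/2"
  proof -
    have "1 + x > 0" "1 - x > 0" using assms by auto
    then show ?thesis by (simp add: artanh_def ln_div)
  qed
  have "(\<lambda>n. (\<lambda>n. (- ((-x)^n) / of_nat n - - ((-(-x))^n) / of_nat n) / 2) (2*n+1)) sums ((ln (1 + x) - ln (1 + -x))/2)"
  proof (subst sums_mono_reindex)
    show "strict_mono (\<lambda>n::nat. 2*n+1)" by (auto simp: strict_mono_def)
    fix n assume "n \<notin> range (\<lambda>n::nat. 2*n+1)"
    then have "even n" by (metis oddE rangeI)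
    then show "(- ((-x)^n) / of_nat n - - ((-(-x))^n) / of_nat n) / 2 = 0" by simp
  qed (rule C)
  moreover have "\<And>n. (- ((-x)^(2*n+1)) / of_nat (2*n+1) - - ((-(-x))^(2*n+1)) / of_nat (2*n+1)) / 2 = x ^ (2*n+1) / real (2*n+1)"
  proof -
    fix n :: nat
    have o: "(-x)^(2*n+1) = - (x^(2*n+1))" by (simp add: power_minus_odd)
    show "(- ((-x)^(2*n+1)) / of_nat (2*n+1) - - ((-(-x))^(2*n+1)) / of_nat (2*n+1)) / 2 = x ^ (2*n+1) / real (2*n+1)"
    proof -
      have g: "\<And>y d::real. (y / d - - y / d) / 2 = y / d" by (simp add: field_simps)
      show ?thesis unfolding o minus_minus by (rule g)
    qed
  qed
  ultimately show ?thesis unfolding e by simp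
qed

lemma P2:
  fixes x :: real assumes "\<bar>x\<bar> < 1"
  shows "(\<lambda>k. x ^ (2*k+2) / real (2*k+2)) sums (- ln (1 - x^2) / 2)"
proof -
  have "\<bar>-(x^2)\<bar> < 1" using assms by (simp add: abs_square_less_1)
  from ln_series'[OF this] have "(\<lambda>n. - ((x^2)^n) / of_nat n) sums ln (1 - x^2)" by simp
  then have "(\<lambda>n. -(- ((x^2)^n) / of_nat n)) sums (- ln (1 - x^2))" by (rule sums_minus)
  then have "(\<lambda>n. (\<lambda>n. -(- ((x^2)^n) / of_nat n)) (Suc n)) sums (- ln (1 - x^2))"
    by (subst sums_Suc_iff) simp
  then have "(\<lambda>n. (-(- ((x^2)^(Suc n)) / of_nat (Suc n))) / 2) sums (- ln (1 - x^2) / 2)"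
    by (rule sums_divide)
  moreover have "\<And>n. (-(- ((x^2)^(Suc n)) / of_nat (Suc n))) / 2 = x ^ (2*n+2) / real (2*n+2)"
  proof -
    fix n :: nat
    have "(x^2)^(Suc n) = x^(2*n+2)"
      by (subst power_mult[symmetric]) simp
    moreover have "real (2*n+2) = 2 * of_nat (Suc n)" by simp
    ultimately show "(-(- ((x^2)^(Suc n)) / of_nat (Suc n))) / 2 = x ^ (2*n+2) / real (2*n+2)"
      by simp
  qed
  ultimately show ?thesis by simp
qed

lemma pf: fixes a::real assumes "a \<noteq> 0" "a+1 \<noteq> 0" "a+2\<noteq>0"
  shows "1/(a*(a+1)*(a+2)) = (1/a)/2 - 1/(a+1) + (1/(a+2))/2"
proof -
  define d where "d = a*(a+1)*(a+2)"
  have d: "d \<noteq> 0" using assms by (simp add: d_def)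
  have e: "1/a = (a+1)*(a+2)/d" "1/(a+1) = a*(a+2)/d" "1/(a+2)=a*(a+1)/d"
    using assms by (simp_all add: d_def)
  have "(1/a)/2 - 1/(a+1) + (1/(a+2))/2 = ((a+1)*(a+2)/2 - a*(a+2) + a*(a+1)/2)/d"
    unfolding e by (simp add: diff_divide_distrib add_divide_distrib)
  also have "(a+1)*(a+2)/2 - a*(a+2) + a*(a+1)/2 = 1" by (simp add: field_simps)
  finally show ?thesis by (simp add: d_def)
qed

lemma Gs:
  fixes x :: real assumes x: "\<bar>x\<bar> < 1" and x0: "x \<noteq> 0"
  shows "(\<lambda>k. x ^ (2 * Suc k) / ((2 * real (Suc k) - 1) * (2 * real (Suc k)) * (2 * real (Suc k) + 1)))
    sums ((x + 1/x)/2 * artanh x + ln (1 - x^2)/2 - 1/2)"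
proof -
  note A = P1[OF x]
  have B: "(\<lambda>k. x ^ (2*Suc k+1) / real (2*Suc k+1)) sums (artanh x - x)"
    using sums_Suc_iff[of "\<lambda>k. x ^ (2*k+1) / real (2*k+1)" "artanh x - x"] A by simp
  have C: "(\<lambda>k. x/2 * (x ^ (2*k+1) / real (2*k+1)) - x ^ (2*k+2) / real (2*k+2)
      + 1/(2*x) * (x ^ (2*Suc k+1) / real (2*Suc k+1)))
     sums (x/2 * artanh x - (- ln (1 - x^2) / 2) + 1/(2*x) * (artanh x - x))"
    by (intro sums_add sums_diff sums_mult A B P2[OF x])
  have e1: "x/2 * artanh x - (- ln (1 - x^2) / 2) + 1/(2*x) * (artanh x - x)
     = (x + 1/x)/2 * artanh x + ln (1 - x^2)/2 - 1/2"
    using x0 by (simp add: field_simps)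
  have e2: "x/2 * (x ^ (2*k+1) / real (2*k+1)) - x ^ (2*k+2) / real (2*k+2)
      + 1/(2*x) * (x ^ (2*Suc k+1) / real (2*Suc k+1))
     = x ^ (2 * Suc k) / ((2 * real (Suc k) - 1) * (2 * real (Suc k)) * (2 * real (Suc k) + 1))" for k
  proof -
    define y where "y = x ^ (2*k)"
    define r where "r = real k"
    have p1: "x ^ (2*k+1) = x * y" "x ^ (2*k+2) = x*x*y" "x ^ (2*Suc k+1) = x*x*x*y"
      "x ^ (2 * Suc k) = x*x*y" unfolding y_def by (simp_all add: power_add)
    have r1: "real (2*k+1) = 2*r+1" "real (2*k+2) = 2*r+2" "real (2*Suc k+1) = 2*r+3"
      "2 * real (Suc k) - 1 = 2*r+1" "2 * real (Suc k) = 2*r+2" "2 * real (Suc k) + 1 = 2*r+3"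
      unfolding r_def by simp_all
    have "r \<ge> 0" unfolding r_def by simp
    then have d: "2*r+1 \<noteq> 0" "2*r+2 \<noteq> 0" "2*r+3 \<noteq> 0" "2*(r+1)-1 \<noteq> 0" "2*(r+1) \<noteq> 0" "2*(r+1)+1 \<noteq> 0"
      by (smt (verit))+
    have L: "x/2 * (x * y / (2*r+1)) - x*x*y / (2*r+2) + 1/(2*x) * (x*x*x*y / (2*r+3))
      = x*x*y * ((1/(2*r+1))/2 - 1/((2*r+1)+1) + (1/((2*r+1)+2))/2)"
      using x0 by (simp add: algebra_simps)
    have R: "x*x*y / ((2*r+1)*(2*r+2)*(2*r+3)) = x*x*y * (1/((2*r+1)*((2*r+1)+1)*((2*r+1)+2)))"
      by (simp add: algebra_simps)
    have P: "1/((2*r+1)*((2*r+1)+1)*((2*r+1)+2)) = (1/(2*r+1))/2 - 1/((2*r+1)+1) + (1/((2*r+1)+2))/2"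
      by (rule pf) (use d in \<open>simp_all add: algebra_simps\<close>)
    have q: "2*r+2-1 = 2*r+1" "2*r+2+1 = 2*r+3" by simp_all
    show ?thesis unfolding p1 r1 q L R P ..
  qed
  show ?thesis using C unfolding e1 e2 .
qed

lemma term_eq:
  fixes z :: real and s :: int and k :: nat assumes z: "z \<noteq> 0"
  shows "z powi (2 * int (Suc k) + s) / (4 ^ Suc k * A * B * C)
       = z powi s * ((z/2) ^ (2 * Suc k) / (A * B * C))"
proof -
  have "z powi (2 * int (Suc k) + s) = z powi (int (2 * Suc k)) * z powi s"
    using z by (simp add: power_int_add)
  also have "z powi (int (2 * Suc k)) = z ^ (2 * Suc k)" by (rule power_int_of_nat)
  finally have 1: "z powi (2 * int (Suc k) + s) = z ^ (2 * Suc k) * z powi s" .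
  have 2: "(z/2) ^ (2 * Suc k) = z ^ (2 * Suc k) / 4 ^ Suc k"
    by (simp add: power_divide power_mult)
  show ?thesis unfolding 1 2 by (simp add: mult_ac)
qed

lemma r_ids:
  fixes r :: real assumes r2: "r*r = 5"
  shows "1 + (1 + r) / 2 / 2 = r * ((1 + r) / 2) ^ 3 * (1 - (1 + r) / 2 / 2)"
   "(1 - ((1 + r) / 2/2)^2) * (4*((1 + r) / 2)) = r"
 "(1 + (1 - r) / 2/2) * ((1 + r) / 2)^3 = r*(1-(1 - r) / 2/2)"
 "1 - ((1 - r) / 2/2)^2 = r * ((1 + r) / 2) / 4"
proof -
  have r3: "\<And>x. r*(r*x) = 5*x" using r2 by (metis mult.assoc)
  show "1 + (1 + r) / 2 / 2 = r * ((1 + r) / 2) ^ 3 * (1 - (1 + r) / 2 / 2)"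
   "(1 - ((1 + r) / 2/2)^2) * (4*((1 + r) / 2)) = r"
 "(1 + (1 - r) / 2/2) * ((1 + r) / 2)^3 = r*(1-(1 - r) / 2/2)"
 "1 - ((1 - r) / 2/2)^2 = r * ((1 + r) / 2) / 4"
   by (simp_all add: field_simps power2_eq_square power3_eq_cube algebra_simps r2 r3)
qed

lemma sqrt5_facts: "sqrt 5 * sqrt 5 = (5::real)" "sqrt 5 > (2::real)" "sqrt 5 < (3::real)"
proof -
  show "sqrt 5 * sqrt 5 = (5::real)" by simp
  show "sqrt 5 > (2::real)" by (rule real_less_rsqrt) simp
  show "sqrt 5 < (3::real)" by (rule real_less_lsqrt) simp_all
qed

theorem theorem13:
  fixes s :: int
  shows "(\<lambda>k. lucZ (2 * int (Suc k) + s)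
             / (4 ^ Suc k * (2 * real (Suc k) - 1) * (2 * real (Suc k)) * (2 * real (Suc k) + 1)))
         sums (- lucZ s * ln 2 + 5 / 16 * lucZ (s + 1) * ln 5
               + sqrt 5 / 8 * (15 * fibZ (s - 1) - fibZ s) * ln phi_alpha - lucZ s / 2)
       \<and> (\<lambda>k. fibZ (2 * int (Suc k) + s)
             / (4 ^ Suc k * (2 * real (Suc k) - 1) * (2 * real (Suc k)) * (2 * real (Suc k) + 1)))
         sums (- fibZ s * ln 2 + 5 / 16 * fibZ (s + 1) * ln 5
               + 1 / (8 * sqrt 5) * (15 * lucZ (s - 1) - lucZ s) * ln phi_alpha - fibZ s / 2)"
proof -
  define r :: real where "r = sqrt 5"
  have r2: "r * r = 5" and r_gt: "r > 2" and r_lt: "r < 3" unfolding r_def using sqrt5_facts by auto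
  define al where "al = phi_alpha"
  define be where "be = phi_beta"
  have al: "al = (1 + r)/2" unfolding al_def phi_alpha_def r_def ..
  have be: "be = (1 - r)/2" unfolding be_def phi_beta_def r_def ..
  have al0: "al \<noteq> 0" "al > 0" and be0: "be \<noteq> 0" using r_gt unfolding al be by auto
  have alb: "\<bar>al/2\<bar> < 1" and beb: "\<bar>be/2\<bar> < 1" using r_gt r_lt unfolding al be by auto
  have ab: "al - be = r" unfolding al be by (simp add: field_simps)
  have inv_al: "al * be = -1" unfolding al be using r2 by (simp add: field_simps)
  define D where "D = (\<lambda>k::nat. (2 * real (Suc k) - 1) * (2 * real (Suc k)) * (2 * real (Suc k) + 1))"
  define T where "T = (\<lambda>x k. x ^ (2 * Suc k) / D k)"
  define G where "G = (\<lambda>x::real. (x + 1/x)/2 * artanh x + ln (1 - x^2)/2 - 1/2)"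
  have TA: "T (al/2) sums G (al/2)" unfolding T_def D_def G_def using Gs[OF alb] al0 by simp
  have TB: "T (be/2) sums G (be/2)" unfolding T_def D_def G_def using Gs[OF beb] be0 by simp
  define a where "a = al powi s"
  define b where "b = be powi s"
  have luc_t: "lucZ (2 * int (Suc k) + s)
             / (4 ^ Suc k * (2 * real (Suc k) - 1) * (2 * real (Suc k)) * (2 * real (Suc k) + 1))
       = a * T (al/2) k + b * T (be/2) k" for k
    unfolding lucZ_def al_def[symmetric] be_def[symmetric] add_divide_distrib
      term_eq[OF al0(1)] term_eq[OF be0] T_def D_def a_def b_def by simp
  have fib_t: "fibZ (2 * int (Suc k) + s)
             / (4 ^ Suc k * (2 * real (Suc k) - 1) * (2 * real (Suc k)) * (2 * real (Suc k) + 1))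
       = (a * T (al/2) k - b * T (be/2) k) / r" for k
  proof -
    have gen: "\<And>X Y r Den::real. (X - Y)/r/Den = (X/Den - Y/Den)/r"
      by (simp add: diff_divide_distrib divide_divide_eq_left mult.commute)
    show ?thesis
      unfolding fibZ_def al_def[symmetric] be_def[symmetric] ab gen
        term_eq[OF al0(1)] term_eq[OF be0] T_def D_def a_def b_def ..
  qed
  have SL: "(\<lambda>k. a * T (al/2) k + b * T (be/2) k) sums (a * G (al/2) + b * G (be/2))"
    by (intro sums_add sums_mult TA TB)
  have SF: "(\<lambda>k. (a * T (al/2) k - b * T (be/2) k) / r) sums ((a * G (al/2) - b * G (be/2)) / r)"
    by (intro sums_divide sums_diff sums_mult TA TB)
  have lr: "ln r = ln 5 / 2" unfolding r_def by (simp add: ln_sqrt)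
  have l4: "ln (4::real) = 2 * ln 2"
  proof -
    have "ln ((2::real)*2) = ln 2 + ln 2" by (simp only: ln_mult) simp
    then show ?thesis by simp
  qed
  have r0: "r > 0" using r_gt by simp
  have al3: "al^3 > 0" using al0 by simp
  have hA1: "ln ((1 + al/2)/(1 - al/2)) = ln 5/2 + 3 * ln al"
  proof -
    have n: "1 - al/2 \<noteq> 0" using r_lt unfolding al by simp
    have "1 + al/2 = r*al^3*(1-al/2)" unfolding al using r_ids(1)[OF r2] .
    then have "(1 + al/2)/(1 - al/2) = r * al^3" using n by (simp add: divide_eq_eq)
    then show ?thesis using r0 al3 al0 by (simp add: ln_mult ln_realpow lr)
  qed
  have hA2: "ln (1 - (al/2)^2) = ln 5/2 - 2 * ln 2 - ln al"
  proof -
    have "(1 - (al/2)^2) * (4*al) = r" unfolding al using r_ids(2)[OF r2] .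
    then have "1 - (al/2)^2 = r / (4*al)" using al0 by (simp add: eq_divide_eq)
    then show ?thesis using r0 al0 by (simp add: ln_mult ln_div lr l4)
  qed
  have hB1: "ln ((1 + be/2)/(1 - be/2)) = ln 5/2 - 3 * ln al"
  proof -
    have n: "1 - be/2 \<noteq> 0" using r_gt unfolding be by simp
    have "(1 + be/2) * al^3 = r*(1-be/2)" unfolding al be using r_ids(3)[OF r2] .
    then have "(1 + be/2)/(1 - be/2) = r / al^3" using n al3 by (simp add: divide_eq_eq eq_divide_eq)
    then show ?thesis using r0 al3 al0 by (simp add: ln_div ln_realpow lr)
  qed
  have hB2: "ln (1 - (be/2)^2) = ln 5/2 - 2 * ln 2 + ln al"
  proof -
    have e: "1 - (be/2)^2 = r * al / 4" unfolding al be using r_ids(4)[OF r2] .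
    show ?thesis unfolding e using r0 al0 by (simp add: ln_mult ln_div lr l4)
  qed
  have iA: "1/(al/2) = -2*be" using inv_al al0 by (simp add: field_simps)
  have iB: "1/(be/2) = -2*al" using inv_al be0 by (simp add: field_simps)
  have GA: "G (al/2) = (al/2 - 2*be)/2 * ((ln 5/2 + 3 * ln al)/2) + (ln 5/2 - 2 * ln 2 - ln al)/2 - 1/2"
    unfolding G_def artanh_def iA hA1 hA2 by simp
  have GB: "G (be/2) = (be/2 - 2*al)/2 * ((ln 5/2 - 3 * ln al)/2) + (ln 5/2 - 2 * ln 2 + ln al)/2 - 1/2"
    unfolding G_def artanh_def iB hB1 hB2 by simp
  have pa: "al powi (s+1) = a * al" "al powi (s-1) = - a * be"
    "be powi (s+1) = b * be" "be powi (s-1) = - b * al"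
  proof -
    have ab3: "\<And>X. al*(be*X) = -X" using inv_al by (metis mult.assoc mult_minus1)
    show "al powi (s+1) = a * al" "al powi (s-1) = - a * be"
    "be powi (s+1) = b * be" "be powi (s-1) = - b * al"
    unfolding a_def b_def using al0 be0 inv_al
    by (simp_all add: power_int_add power_int_diff field_simps ab3)
  qed
  have L0: "lucZ s = a + b" "lucZ (s+1) = a*al + b*be" "lucZ (s-1) = -a*be - b*al"
    unfolding lucZ_def al_def[symmetric] be_def[symmetric] pa a_def b_def by simp_all
  have F0: "fibZ s = (a - b)/r" "fibZ (s+1) = (a*al - b*be)/r" "fibZ (s-1) = (-a*be + b*al)/r"
    unfolding fibZ_def al_def[symmetric] be_def[symmetric] pa a_def b_def ab by simp_all
  have eqL: "a * G (al/2) + b * G (be/2) = - lucZ s * ln 2 + 5 / 16 * lucZ (s + 1) * ln 5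
               + sqrt 5 / 8 * (15 * fibZ (s - 1) - fibZ s) * ln phi_alpha - lucZ s / 2"
    unfolding GA GB L0 F0 r_def[symmetric] al_def[symmetric] using r0
    unfolding al be by (simp add: field_simps)
  have eqF: "(a * G (al/2) - b * G (be/2)) / r = - fibZ s * ln 2 + 5 / 16 * fibZ (s + 1) * ln 5
               + 1 / (8 * sqrt 5) * (15 * lucZ (s - 1) - lucZ s) * ln phi_alpha - fibZ s / 2"
    unfolding GA GB L0 F0 r_def[symmetric] al_def[symmetric] using r0
    unfolding al be by (simp add: field_simps)
  show ?thesis
    unfolding luc_t fib_t eqL[symmetric] eqF[symmetric] using SL SF by simp
qed

end
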